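(* Let $q$ be a prime power, $q-1=ds$ with $d,s$ positive integers, let $r_0,\dots,r_{d-1}$ be positive integers, let $a_0,\dots,a_{d-1}\in\mathbb{F}_q^*$, let $\xi$ be a primitive element of $\mathbb{F}_q$ and $\omega=\xi^s$. Let $$f(x)=\frac{1}{d}\sum_{i=0}^{d-1}\sum_{j=0}^{d-1} a_i\,\omega^{-ij}\,x^{r_i+js}\in\mathbb{F}_q[x].$$ If $f$ is a permutation polynomial of $\mathbb{F}_q$, then its inverse over $\mathbb{F}_q$ is given by $$f^{-1}(x)=\frac{1}{d}\sum_{i=0}^{d-1}\sum_{j=0}^{d-1}\omega^{i(t_i-jr_i)}\left(\frac{x}{a_i}\right)^{\tilde r_i+js},$$ where $\tilde r_i,t_i\in\mathbb{Z}$ satisfy $1\le \tilde r_i<s$ and $r_i\tilde r_i+st_i=1$ (for each $i=0,\dots,d-1$).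
   Context: A polynomial $f\in\mathbb{F}_q[x]$ is a permutation polynomial of $\mathbb{F}_q$ if it induces a bijection of $\mathbb{F}_q$. A polynomial $g$ is the inverse of $f$ over $\mathbb{F}_q$ if $g(f(c))=c$ for all $c\in\mathbb{F}_q$ (equivalently $g(f(x))\equiv x\pmod{x^q-x}$). Since $d\mid q-1$, $d$ is invertible in $\mathbb{F}_q$, so $1/d$ makes sense. (The polynomial $f$ is the cyclotomic mapping with $f(0)=0$ and $f(x)=a_ix^{r_i}$ for $x\in\xi^i\langle\xi^d\rangle$.) *)

theory Defs
  imports "HOL-Computational_Algebra.Polynomial"
begin

definition primitive_element :: "'a::{field,finite} \<Rightarrow> bool" where
  "primitive_element \<xi> \<longleftrightarrow> \<xi> \<noteq> 0 \<and> (\<forall>x. x \<noteq> 0 \<longrightarrow> (\<exists>k::nat. x = \<xi> ^ k))"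

definition perm_poly :: "'a::{field,finite} poly \<Rightarrow> bool" where
  "perm_poly f \<longleftrightarrow> bij (poly f)"

end

theory Submission
  imports Defs
begin

lemma prim_order:
  fixes \<xi> :: "'a::{field,finite}"
  assumes "primitive_element \<xi>"
  shows "\<xi> ^ (card (UNIV::'a set) - 1) = 1 \<and> (\<forall>m. \<xi> ^ m = 1 \<longrightarrow> (card (UNIV::'a set) - 1) dvd m)"
proof -
  have xi0: "\<xi> \<noteq> 0" using assms by (simp add: primitive_element_def)
  have "\<not> inj (\<lambda>k::nat. \<xi> ^ k)"
  proof
    assume "inj (\<lambda>k::nat. \<xi> ^ k)"
    hence "infinite (range (\<lambda>k::nat. \<xi> ^ k))"
      using finite_imageD infinite_UNIV_nat by blast
    thus False by simp
  qed
  then obtain a b :: nat where ab: "\<xi> ^ a = \<xi> ^ b" "a \<noteq> b" unfolding inj_def by blast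
  have "\<exists>k>0. \<xi> ^ k = 1"
  proof (cases "a < b")
    case True
    have "\<xi> ^ b = \<xi> ^ a * \<xi> ^ (b - a)" using True by (simp flip: power_add)
    thus ?thesis using ab xi0 True by (intro exI[of _ "b - a"]) auto
  next
    case False
    hence "b < a" using ab by simp
    have "\<xi> ^ a = \<xi> ^ b * \<xi> ^ (a - b)" using \<open>b < a\<close> by (simp flip: power_add)
    thus ?thesis using ab xi0 \<open>b < a\<close> by (intro exI[of _ "a - b"]) auto
  qed
  define n where "n = (LEAST k. 0 < k \<and> \<xi> ^ k = 1)"
  have n: "0 < n" "\<xi> ^ n = 1" using LeastI_ex[OF \<open>\<exists>k>0. \<xi> ^ k = 1\<close>] n_def by auto
  have nmin: "\<And>k. 0 < k \<Longrightarrow> k < n \<Longrightarrow> \<xi> ^ k \<noteq> 1" using not_less_Least n_def by blast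
  have pmod: "\<xi> ^ m = \<xi> ^ (m mod n)" for m
  proof -
    have "\<xi> ^ m = \<xi> ^ (n * (m div n) + m mod n)" by simp
    also have "\<dots> = (\<xi> ^ n) ^ (m div n) * \<xi> ^ (m mod n)" by (simp only: power_add power_mult)
    finally show ?thesis using n by simp
  qed
  have img: "(\<lambda>k. \<xi> ^ k) ` {..<n} = UNIV - {0}"
  proof
    show "(\<lambda>k. \<xi> ^ k) ` {..<n} \<subseteq> UNIV - {0}" using xi0 by auto
    show "UNIV - {0} \<subseteq> (\<lambda>k. \<xi> ^ k) ` {..<n}"
    proof
      fix x :: 'a assume "x \<in> UNIV - {0}"
      then obtain k where "x = \<xi> ^ k" using assms unfolding primitive_element_def by auto
      thus "x \<in> (\<lambda>k. \<xi> ^ k) ` {..<n}" using pmod[of k] n(1) by auto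
    qed
  qed
  have inj: "inj_on (\<lambda>k. \<xi> ^ k) {..<n}"
  proof (rule inj_onI)
    fix a b assume a: "a \<in> {..<n}" and b: "b \<in> {..<n}" and e: "\<xi> ^ a = \<xi> ^ b"
    show "a = b"
    proof (rule ccontr)
      assume "a \<noteq> b"
      then consider "a < b" | "b < a" by linarith
      thus False
      proof cases
        case 1
        have "\<xi> ^ b = \<xi> ^ a * \<xi> ^ (b - a)" using 1 by (simp flip: power_add)
        hence "\<xi> ^ (b - a) = 1" using e xi0 by auto
        thus False using nmin[of "b-a"] 1 b by (auto simp: less_imp_diff_less)
      next
        case 2
        have "\<xi> ^ a = \<xi> ^ b * \<xi> ^ (a - b)" using 2 by (simp flip: power_add)
        hence "\<xi> ^ (a - b) = 1" using e xi0 by auto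
        thus False using nmin[of "a-b"] 2 a by (auto simp: less_imp_diff_less)
      qed
    qed
  qed
  have "card (UNIV - {0::'a}) = card (UNIV::'a set) - 1" by (simp add: card_Diff_singleton)
  hence nN: "n = card (UNIV::'a set) - 1" using card_image[OF inj] img by simp
  show ?thesis
  proof (intro conjI allI impI)
    show "\<xi> ^ (card (UNIV::'a set) - 1) = 1" using n nN by simp
    fix m assume "\<xi> ^ m = 1"
    hence "\<xi> ^ (m mod n) = 1" using pmod by simp
    hence "m mod n = 0" using nmin[of "m mod n"] n(1) by (meson mod_less_divisor neq0_conv)
    thus "(card (UNIV::'a set) - 1) dvd m" using nN by auto
  qed
qed

lemma rootsum:
  fixes z :: "'a::field"
  assumes "z ^ d = 1"
  shows "(\<Sum>j<d. z ^ j) = (if z = 1 then of_nat d else 0)"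
  using assms by (auto simp: geometric_sum)

lemma powsplit:
  fixes u :: "'a::field"
  assumes "u \<noteq> 0" "int r * int rt + int s * t = 1"
  shows "u ^ (r * rt) = u * (u ^ s) powi (- t)"
proof -
  have "u ^ (r * rt) = u powi (int r * int rt)" by (simp flip: power_int_of_nat)
  also have "int r * int rt = 1 + int s * (- t)" using assms(2) by algebra
  also have "u powi (1 + int s * (- t)) = u powi 1 * u powi (int s * (-t))"
    by (rule power_int_add) (simp add: assms(1))
  also have "u powi (int s * (-t)) = (u ^ s) powi (-t)" by (simp only: power_int_mult power_int_of_nat)
  finally show ?thesis by simp
qed

theorem theorem3p3:
  fixes d s :: nat and r rt :: "nat \<Rightarrow> nat" and t :: "nat \<Rightarrow> int"
    and a :: "nat \<Rightarrow> 'a::{field,finite}" and \<xi> \<omega> :: 'a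
  assumes "0 < d" and "0 < s" and "card (UNIV :: 'a set) - 1 = d * s"
    and "\<forall>i<d. 0 < r i"
    and "\<forall>i<d. a i \<noteq> 0"
    and "primitive_element \<xi>" and "\<omega> = \<xi> ^ s"
    and "\<forall>i<d. 1 \<le> rt i \<and> rt i < s \<and> int (r i) * int (rt i) + int s * t i = 1"
    and "perm_poly (smult (inverse (of_nat d))
           (\<Sum>i<d. \<Sum>j<d. monom (a i * \<omega> powi (- (int i * int j))) (r i + j * s)))"
  shows "\<forall>c. poly (smult (inverse (of_nat d))
           (\<Sum>i<d. \<Sum>j<d. smult (\<omega> powi (int i * (t i - int j * int (r i))))
                                ([:0, inverse (a i):] ^ (rt i + j * s))))
         (poly (smult (inverse (of_nat d))
           (\<Sum>i<d. \<Sum>j<d. monom (a i * \<omega> powi (- (int i * int j))) (r i + j * s))) c) = c"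
proof -
  define P where "P = smult (inverse (of_nat d))
           (\<Sum>i<d. \<Sum>j<d. monom (a i * \<omega> powi (- (int i * int j))) (r i + j * s))"
  define Q where "Q = smult (inverse (of_nat d))
           (\<Sum>i<d. \<Sum>j<d. smult (\<omega> powi (int i * (t i - int j * int (r i))))
                                ([:0, inverse (a i):] ^ (rt i + j * s)))"
  have bij: "bij (poly P)" using assms(9) unfolding P_def perm_poly_def by simp
  note ord = prim_order[OF assms(6)]
  have xi0: "\<xi> \<noteq> 0" using assms(6) by (simp add: primitive_element_def)
  have om0: "\<omega> \<noteq> 0" using xi0 assms(7) by simp
  have xiN: "\<xi> ^ (d * s) = 1" using ord assms(3) by simp
  have omd: "\<omega> ^ d = 1" using xiN assms(7) by (metis power_mult mult.commute)
  have pow1: "u ^ (d * s) = 1" if u0: "u \<noteq> 0" for u :: 'a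
  proof -
    obtain k where "u = \<xi> ^ k" using assms(6) u0 unfolding primitive_element_def by auto
    thus ?thesis using xiN by (metis power_mult mult.commute power_one)
  qed
  have omeq_aux: "i = i0" if "i \<le> i0" "i0 < d" "\<omega> ^ i = \<omega> ^ i0" for i i0
  proof -
    have "\<omega> ^ i0 = \<omega> ^ i * \<omega> ^ (i0 - i)" using that(1) by (simp flip: power_add)
    hence "\<omega> ^ (i0 - i) = 1" using that om0 by auto
    hence "\<xi> ^ (s * (i0 - i)) = 1" using assms(7) by (simp add: power_mult)
    hence "d * s dvd s * (i0 - i)" using ord assms(3) by simp
    hence "d dvd i0 - i" using assms(2) by (simp add: mult.commute)
    moreover have "i0 - i < d" using that by linarith
    ultimately have "i0 - i = 0" using nat_dvd_not_less by blast
    thus ?thesis using that(1) by simp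
  qed
  have omeq: "i = i0" if "i < d" "i0 < d" "\<omega> ^ i = \<omega> ^ i0" for i i0
    using omeq_aux[of i i0] omeq_aux[of i0 i] that by (metis nat_le_linear)
  have cls: "\<exists>k<d. u ^ s = \<omega> ^ k" if u0: "u \<noteq> 0" for u :: 'a
  proof -
    obtain k where k: "u = \<xi> ^ k" using assms(6) u0 unfolding primitive_element_def by auto
    have "u ^ s = \<omega> ^ k" using k assms(7) by (simp flip: power_mult add: mult.commute)
    also have "\<omega> ^ k = \<omega> ^ (d * (k div d) + k mod d)" by simp
    also have "\<dots> = (\<omega> ^ d) ^ (k div d) * \<omega> ^ (k mod d)" by (simp only: power_add power_mult)
    finally show ?thesis using omd assms(1) by (intro exI[of _ "k mod d"]) auto
  qed
  have dne: "(of_nat d :: 'a) \<noteq> 0"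
  proof
    assume "(of_nat d :: 'a) = 0"
    hence "P = 0" unfolding P_def by simp
    hence "poly P 0 = poly P 1" by simp
    thus False using bij unfolding bij_def inj_def by (metis zero_neq_one)
  qed
  have zd: "(inverse (\<omega> ^ i) * \<omega> ^ k) ^ d = 1" for i k
  proof -
    have "(inverse (\<omega> ^ i) * \<omega> ^ k) ^ d = inverse ((\<omega> ^ d) ^ i) * (\<omega> ^ d) ^ k"
      by (simp add: power_mult_distrib power_inverse flip: power_mult add: mult.commute)
    thus ?thesis using omd by simp
  qed
  have inner: "(\<Sum>j<d. (inverse (\<omega> ^ i) * \<omega> ^ k0) ^ j) = (if i = k0 then of_nat d else 0)"
    if "i < d" "k0 < d" for i k0
  proof -
    have "(inverse (\<omega> ^ i) * \<omega> ^ k0 = 1) \<longleftrightarrow> \<omega> ^ k0 = \<omega> ^ i"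
      using om0 by (auto simp: field_simps)
    also have "\<dots> \<longleftrightarrow> i = k0" using omeq[of k0 i] that by auto
    finally show ?thesis using rootsum[OF zd[of i k0]] by simp
  qed
  have Feval: "poly P c = a k0 * c ^ r k0" if c0: "c \<noteq> 0" and k0: "k0 < d"
    and cs: "c ^ s = \<omega> ^ k0" for c k0
  proof -
    have trm: "a i * \<omega> powi (- (int i * int j)) * c ^ (r i + j * s)
        = a i * c ^ r i * (inverse (\<omega> ^ i) * \<omega> ^ k0) ^ j" for i j
    proof -
      have "\<omega> powi (- (int i * int j)) = inverse (\<omega> ^ (i * j))"
        by (metis power_int_minus power_int_of_nat of_nat_mult)
      also have "\<dots> = inverse (\<omega> ^ i) ^ j" by (simp add: power_mult power_inverse)
      finally have 1: "\<omega> powi (- (int i * int j)) = inverse (\<omega> ^ i) ^ j" .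
      have 2: "c ^ (r i + j * s) = c ^ r i * (\<omega> ^ k0) ^ j"
        using cs by (simp add: power_add mult.commute[of j s] power_mult)
      show ?thesis unfolding 1 2 by (simp add: power_mult_distrib mult_ac)
    qed
    have "poly P c = inverse (of_nat d) *
        (\<Sum>i<d. \<Sum>j<d. a i * \<omega> powi (- (int i * int j)) * c ^ (r i + j * s))"
      by (simp add: P_def poly_sum poly_monom)
    also have "\<dots> = inverse (of_nat d) *
        (\<Sum>i<d. a i * c ^ r i * (\<Sum>j<d. (inverse (\<omega> ^ i) * \<omega> ^ k0) ^ j))"
      by (simp only: trm sum_distrib_left)
    also have "\<dots> = inverse (of_nat d) *
        (\<Sum>i<d. (if i = k0 then a i * c ^ r i * of_nat d else 0))"
      by (intro arg_cong[where f="\<lambda>x. _ * x"] sum.cong refl) (simp add: inner k0)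
    also have "\<dots> = a k0 * c ^ r k0" using k0 dne by (simp add: sum.delta)
    finally show ?thesis .
  qed
  have ompm: "\<omega> powi m * \<omega> powi (- m) = 1" for m
    using om0 by (simp add: power_int_minus)
  have omadd: "\<omega> powi m * \<omega> powi n = \<omega> powi (m + n)" for m n
    using om0 by (simp add: power_int_add)
  have Qeval: "poly Q y = inverse (of_nat d) * (\<Sum>i<d.
      (\<omega> powi (int i * t i) * (y * inverse (a i)) ^ rt i) *
      (\<Sum>j<d. (inverse (\<omega> ^ (i * r i)) * (y * inverse (a i)) ^ s) ^ j))" for y
  proof -
    have trm: "\<omega> powi (int i * (t i - int j * int (r i))) * (y * inverse (a i)) ^ (rt i + j * s)
      = (\<omega> powi (int i * t i) * (y * inverse (a i)) ^ rt i) *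
        (inverse (\<omega> ^ (i * r i)) * (y * inverse (a i)) ^ s) ^ j" for i j
    proof -
      have "int i * (t i - int j * int (r i)) = int i * t i + (- int (i * r i)) * int j" by (simp add: algebra_simps)
      hence "\<omega> powi (int i * (t i - int j * int (r i))) = \<omega> powi (int i * t i) * \<omega> powi ((- int (i * r i)) * int j)"
        using omadd by metis
      also have "\<omega> powi ((- int (i * r i)) * int j) = inverse (\<omega> ^ (i * r i)) ^ j"
        by (simp only: power_int_mult power_int_minus power_int_of_nat)
      finally have 1: "\<omega> powi (int i * (t i - int j * int (r i))) = \<omega> powi (int i * t i) * inverse (\<omega> ^ (i * r i)) ^ j" .
      have 2: "(y * inverse (a i)) ^ (rt i + j * s) = (y * inverse (a i)) ^ rt i * ((y * inverse (a i)) ^ s) ^ j"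
        by (simp add: power_add mult.commute[of j s] power_mult)
      show ?thesis unfolding 1 2 by (simp add: power_mult_distrib mult_ac)
    qed
    have pl: "poly [:0, inverse (a i):] y = y * inverse (a i)" for i by simp
    have "poly Q y = inverse (of_nat d) * (\<Sum>i<d. \<Sum>j<d.
       \<omega> powi (int i * (t i - int j * int (r i))) * (y * inverse (a i)) ^ (rt i + j * s))"
      by (simp only: Q_def poly_sum poly_smult poly_power pl)
    also have "\<dots> = inverse (of_nat d) * (\<Sum>i<d.
      (\<omega> powi (int i * t i) * (y * inverse (a i)) ^ rt i) *
      (\<Sum>j<d. (inverse (\<omega> ^ (i * r i)) * (y * inverse (a i)) ^ s) ^ j))"
      by (simp only: trm sum_distrib_left)
    finally show ?thesis .
  qed
  have inj: "inj (poly P)" using bij bij_def by blast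
  have main: "poly Q (poly P c) = c" for c
  proof (cases "c = 0")
    case True
    have "poly P 0 = 0" unfolding P_def using assms(4)
      by (auto simp: poly_sum poly_monom intro!: sum.neutral)
    moreover have "poly Q 0 = 0" unfolding Q_def using assms(8)
      by (auto simp: poly_sum intro!: sum.neutral)
    ultimately show ?thesis using True by simp
  next
    case False
    obtain k0 where k0: "k0 < d" "c ^ s = \<omega> ^ k0" using cls[OF False] by blast
    define y where "y = poly P c"
    have y: "y = a k0 * c ^ r k0" using Feval[OF False k0] y_def by simp
    have y0: "y \<noteq> 0" using y False assms(5) k0 by simp
    define u where "u i = y * inverse (a i)" for i
    define z where "z i = inverse (\<omega> ^ (i * r i)) * u i ^ s" for i
    define c' where "c' i = \<omega> powi (int i * t i) * u i ^ rt i" for i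
    have u0: "u i \<noteq> 0" if "i < d" for i using y0 assms(5) that u_def by simp
    have zd: "z i ^ d = 1" if "i < d" for i
    proof -
      have "z i ^ d = inverse ((\<omega> ^ d) ^ (i * r i)) * u i ^ (d * s)"
        unfolding z_def by (simp add: power_mult_distrib power_inverse flip: power_mult add: mult.commute)
      thus ?thesis using omd pow1[OF u0[OF that]] by simp
    qed
    have uk0: "u k0 = c ^ r k0" using y u_def assms(5) k0 by simp
    have zk0: "z k0 = 1"
    proof -
      have "u k0 ^ s = \<omega> ^ (k0 * r k0)" using uk0 k0
        by (metis power_mult mult.commute)
      thus ?thesis unfolding z_def using om0 by simp
    qed
    have rrt: "int (r i) * int (rt i) + int s * t i = 1" if "i < d" for i using assms(8) that by blast
    have ck0: "c' k0 = c"
    proof -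
      have "c' k0 = \<omega> powi (int k0 * t k0) * c ^ (r k0 * rt k0)"
        unfolding c'_def uk0 by (simp add: power_mult)
      also have "\<dots> = \<omega> powi (int k0 * t k0) * (c * (\<omega> ^ k0) powi (- t k0))"
        using powsplit[OF False rrt[OF k0(1)]] k0 by simp
      also have "(\<omega> ^ k0) powi (- t k0) = \<omega> powi (- (int k0 * t k0))"
        by (simp add: power_int_power)
      finally show ?thesis using ompm[of "int k0 * t k0"] by (simp add: mult_ac)
    qed
    have zi: "i = k0" if i: "i < d" and zi1: "z i = 1" for i
    proof -
      have us: "u i ^ s = \<omega> ^ (i * r i)"
        using zi1 om0 unfolding z_def by (simp add: field_simps)
      have c's: "c' i ^ s = \<omega> ^ i"
      proof -
        have "c' i ^ s = \<omega> powi (int i * t i * int s) * (u i ^ s) ^ rt i"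
          unfolding c'_def by (simp add: power_mult_distrib power_int_power' flip: power_mult add: mult.commute[of "rt i" s])
        also have "(u i ^ s) ^ rt i = \<omega> powi (int i * int (r i) * int (rt i))"
          unfolding us by (simp flip: power_mult power_int_of_nat add: power_int_mult)
        also have "\<omega> powi (int i * t i * int s) * \<omega> powi (int i * int (r i) * int (rt i))
            = \<omega> powi (int i * (int (r i) * int (rt i) + int s * t i))"
          by (simp add: omadd algebra_simps)
        finally show ?thesis using rrt[OF i] by simp
      qed
      have c'0: "c' i \<noteq> 0" using om0 u0[OF i] unfolding c'_def by simp
      have c'r: "c' i ^ r i = u i"
      proof -
        have "c' i ^ r i = \<omega> powi (int i * t i * int (r i)) * u i ^ (r i * rt i)"
          unfolding c'_def by (simp add: power_mult_distrib power_int_power' flip: power_mult add: mult.commute[of "rt i" "r i"])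
        also have "u i ^ (r i * rt i) = u i * \<omega> powi (- (int i * t i * int (r i)))"
          using powsplit[OF u0[OF i] rrt[OF i]] unfolding us
          by (simp add: power_int_power mult_ac)
        finally show ?thesis using ompm[of "int i * t i * int (r i)"] by (simp add: mult_ac)
      qed
      have "poly P (c' i) = a i * c' i ^ r i"
        using Feval[OF c'0 i c's] .
      also have "\<dots> = y" using c'r u_def assms(5) i by simp
      finally have "c' i = c" using inj y_def unfolding inj_def by blast
      hence "\<omega> ^ i = \<omega> ^ k0" using c's k0 by simp
      thus ?thesis using omeq i k0 by blast
    qed
    have "poly Q y = inverse (of_nat d) * (\<Sum>i<d. c' i * (\<Sum>j<d. z i ^ j))"
      unfolding Qeval c'_def z_def u_def ..
    also have "\<dots> = inverse (of_nat d) * (\<Sum>i<d. if i = k0 then c' i * of_nat d else 0)"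
      by (intro arg_cong[where f="\<lambda>x. _ * x"] sum.cong refl)
         (auto simp: rootsum[OF zd] zk0 dest: zi)
    also have "\<dots> = c" using k0 dne ck0 by (simp add: sum.delta)
    finally show ?thesis using y_def by simp
  qed
  show ?thesis using main unfolding P_def Q_def by blast
qed

end
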